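(* Let $a,b,d>0$, $c\in\mathbb{R}$, and let $\phi(x)=\frac{ax^3+bx^2+cx+d}{x^3}$ for $x>0$. \begin{description} \item[(a)] The cubic polynomial $Q(x)=(4a)x^3-(b^2)x^2-(18abd)x+27a^2d^2+4db^3$ has a unique negative zero. \item[(b)] Let $c_{-}$ denote the unique negative zero of $Q$. If $c>c_{-}$, then for every initial value $x_0>0$ all iterates of $x_{n+1}=\phi(x_n)$ are positive, i.e. nonpositive iterates never occur. \item[(c)] Let $c^{*}=-\sqrt{3bd}$. Then $c_{-}<c^{*}$. \item[(d)] If $c\geq c^{*}$ then $\phi$ is decreasing on $(0,\infty)$ and has a unique (positive) equilibrium. If $c_{-}<c<c^{*}$ then $\phi$ has a local minimum point $x_m$ and a local maximum point $x_M$, where $$0<x_{m}=\frac{-c-\sqrt{c^2-3bd}}{b}<x_{M}=\frac{-c+\sqrt{c^2-3bd}}{b}.$$ \end{description}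
   Context: The map $\phi$ is the right-hand side of the difference equation $x_{n+1}=\frac{ax_n^3+bx_n^2+cx_n+d}{x_n^3}$, $x_0>0$. An equilibrium of $\phi$ is a point $t>0$ with $\phi(t)=t$. *)

theory Defs
  imports Complex_Main
begin

definition phi :: "real \<Rightarrow> real \<Rightarrow> real \<Rightarrow> real \<Rightarrow> real \<Rightarrow> real" where
  "phi a b c d x = (a * x ^ 3 + b * x ^ 2 + c * x + d) / x ^ 3"

definition Q :: "real \<Rightarrow> real \<Rightarrow> real \<Rightarrow> real \<Rightarrow> real" where
  "Q a b d x = 4 * a * x ^ 3 - b ^ 2 * x ^ 2 - 18 * a * b * d * x + 27 * a ^ 2 * d ^ 2 + 4 * d * b ^ 3"

definition c_minus :: "real \<Rightarrow> real \<Rightarrow> real \<Rightarrow> real" where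
  "c_minus a b d = (THE x. x < 0 \<and> Q a b d x = 0)"

definition is_local_min :: "(real \<Rightarrow> real) \<Rightarrow> real \<Rightarrow> bool" where
  "is_local_min f x \<longleftrightarrow> (\<exists>e>0. \<forall>y. \<bar>y - x\<bar> < e \<longrightarrow> f x \<le> f y)"

definition is_local_max :: "(real \<Rightarrow> real) \<Rightarrow> real \<Rightarrow> bool" where
  "is_local_max f x \<longleftrightarrow> (\<exists>e>0. \<forall>y. \<bar>y - x\<bar> < e \<longrightarrow> f y \<le> f x)"

end

theory Submission imports Defs begin

lemma Q_cmp:
  fixes a b d x z :: real
  assumes a: "a > 0" and b: "b > 0" and d: "d > 0" and zx: "z < x" and x: "x < 0"
  shows "x * Q a b d z > z * Q a b d x"
proof -
  have xz: "x * z > 0" using zx x by (simp add: mult_neg_neg)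
  have "x * Q a b d z - z * Q a b d x
     = 4*a*(x*z)*(z^2 - x^2) + b^2*(x*z)*(x - z) + (27 * a ^ 2 * d ^ 2 + 4 * d * b ^ 3)*(x - z)"
    by (simp add: Q_def algebra_simps power2_eq_square power3_eq_cube)
  moreover have "z^2 - x^2 > 0"
  proof -
    have "z^2 - x^2 = (x - z) * (-(z + x))" by (simp add: algebra_simps power2_eq_square)
    moreover have "(x - z) * (-(z + x)) > 0" using zx x by (intro mult_pos_pos) auto
    ultimately show ?thesis by simp
  qed
  moreover have "4*a*(x*z)*(z^2 - x^2) > 0" using a xz calculation(2) by simp
  moreover have "b^2*(x*z)*(x - z) > 0" using b xz zx by simp
  moreover have "(27 * a ^ 2 * d ^ 2 + 4 * d * b ^ 3)*(x - z) > 0" using a b d zx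
    by (simp add: add_pos_pos)
  ultimately show ?thesis by linarith
qed

lemma Q0: "a > 0 \<Longrightarrow> b > 0 \<Longrightarrow> d > 0 \<Longrightarrow> Q a b d 0 > (0::real)"
  by (simp add: Q_def add_pos_pos)

lemma Q_exists:
  fixes a b d :: real
  assumes a: "a > 0" and b: "b > 0" and d: "d > 0"
  shows "\<exists>x<0. Q a b d x = 0"
proof -
  define K where "K = 27 * a ^ 2 * d ^ 2 + 4 * d * b ^ 3"
  have K: "K > 0" using a b d by (simp add: K_def add_pos_pos)
  define U where "U = 1 + (K + 18*a*b*d)/b^2"
  have U1: "U \<ge> 1" using K a b d by (simp add: U_def)
  have "b^2 * U > K + 18*a*b*d" using b K by (simp add: U_def field_simps)
  hence "b^2 * U * U > (K + 18*a*b*d) * U" using U1 by simp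
  moreover have "(K + 18*a*b*d) * U \<ge> K + 18*a*b*d*U" using U1 K by (simp add: algebra_simps)
  moreover have "4*a*U^3 > 0" using a U1 by simp
  moreover have "Q a b d (-U) = K + 18*a*b*d*U - b^2*U^2 - 4*a*U^3"
    by (simp add: Q_def K_def power2_eq_square power3_eq_cube)
  ultimately have QU: "Q a b d (-U) < 0" by (simp add: power2_eq_square)
  have "continuous_on {-U..0} (Q a b d)" unfolding Q_def by (intro continuous_intros)
  then obtain x where x: "-U \<le> x" "x \<le> 0" "Q a b d x = 0"
    using IVT'[of "Q a b d" "-U" 0 0] QU Q0[OF a b d] U1 by auto
  moreover have "x \<noteq> 0" using x Q0[OF a b d] by auto
  ultimately show ?thesis by (intro exI[of _ x]) auto
qed

lemma cm_props:
  fixes a b d :: real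
  assumes a: "a > 0" and b: "b > 0" and d: "d > 0"
  shows "c_minus a b d < 0" "Q a b d (c_minus a b d) = 0"
    "\<And>x. x < 0 \<Longrightarrow> Q a b d x > 0 \<longleftrightarrow> c_minus a b d < x"
    "\<exists>!x. x < 0 \<and> Q a b d x = 0"
proof -
  obtain z where z: "z < 0" "Q a b d z = 0" using Q_exists[OF a b d] by auto
  have gt: "Q a b d x > 0" if "z < x" "x < 0" for x
  proof -
    have "x * Q a b d z > z * Q a b d x" using Q_cmp[OF a b d that] .
    with z have "z * Q a b d x < 0" by simp
    with z show ?thesis by (simp add: mult_less_0_iff)
  qed
  have lt: "Q a b d x < 0" if "x < z" for x
  proof -
    have "z * Q a b d x > x * Q a b d z" using Q_cmp[OF a b d that z(1)] .
    with z have "z * Q a b d x > 0" by simp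
    with z show ?thesis by (simp add: zero_less_mult_iff)
  qed
  have u: "\<exists>!x. x < 0 \<and> Q a b d x = 0"
  proof (rule ex1I[of _ z])
    show "z < 0 \<and> Q a b d z = 0" using z by simp
    fix y assume "y < 0 \<and> Q a b d y = 0"
    with gt lt show "y = z" by (metis less_irrefl linorder_neqE_linordered_idom)
  qed
  have cz: "c_minus a b d = z" unfolding c_minus_def
    by (rule the1_equality[OF u]) (use z in simp)
  show "c_minus a b d < 0" "Q a b d (c_minus a b d) = 0" using z cz by auto
  show "\<exists>!x. x < 0 \<and> Q a b d x = 0" by (rule u)
  fix x :: real assume "x < 0"
  show "Q a b d x > 0 \<longleftrightarrow> c_minus a b d < x"
  proof
    assume q: "Q a b d x > 0"
    show "c_minus a b d < x"
    proof (rule ccontr)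
      assume "\<not> c_minus a b d < x"
      hence "x < z \<or> x = z" using cz by auto
      thus False using lt[of x] q z by auto
    qed
  next
    assume "c_minus a b d < x" thus "Q a b d x > 0" using gt cz \<open>x < 0\<close> by simp
  qed
qed

lemma disc_identity:
  fixes a b c x :: real
  shows "- Q a b (-(a*x^3+b*x^2+c*x)) c
    = ((b + a*x)^2 - 4*a*(c + b*x + a*x^2)) * (a*x^2 + (b + a*x)*x + (c + b*x + a*x^2))^2"
  unfolding Q_def by (simp add: algebra_simps power2_eq_square power3_eq_cube)

lemma num_pos:
  fixes a b c d :: real
  assumes a: "a > 0" and b: "b > 0" and d: "d > 0" and c: "c < 0" and Qc: "Q a b d c > 0"
    and x0: "x0 > 0"
  shows "a*x0^3+b*x0^2+c*x0+d > 0"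
proof (rule ccontr)
  assume "\<not> ?thesis"
  hence N0: "a*x0^3+b*x0^2+c*x0+d \<le> 0" by simp
  define N where "N = (\<lambda>t::real. -(a*t^3+b*t^2+c*t+d))"
  have "continuous_on {0..x0} N" unfolding N_def by (intro continuous_intros)
  then obtain x1 where x1: "0 \<le> x1" "x1 \<le> x0" "N x1 = 0"
    using IVT'[of N 0 0 x0] N0 d x0 by (auto simp: N_def)
  have "x1 \<noteq> 0" using x1 d by (auto simp: N_def)
  with x1 have x1p: "x1 > 0" by simp
  have dd: "d = -(a*x1^3+b*x1^2+c*x1)" using x1 by (simp add: N_def algebra_simps)
  define f where "f = c + b*x1 + a*x1^2"
  have "x1 * f = -d" using dd by (simp add: f_def algebra_simps power2_eq_square power3_eq_cube)
  hence "x1 * f < 0" using d by simp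
  hence fneg: "f < 0" using x1p by (simp add: mult_less_0_iff)
  have "a*f < 0" using fneg a by (simp add: mult_pos_neg)
  moreover have "(b + a*x1)^2 \<ge> 0" by simp
  ultimately have "(b + a*x1)^2 - 4*a*f > 0" by linarith
  moreover have "- Q a b d c = ((b + a*x1)^2 - 4*a*f) * (a*x1^2 + (b + a*x1)*x1 + f)^2"
    unfolding f_def using disc_identity[of a b x1 c] by (simp only: dd[symmetric])
  ultimately have "- Q a b d c \<ge> 0" by (metis less_imp_le mult_nonneg_nonneg zero_le_power2)
  with Qc show False by simp
qed

lemma phi_alt: "x \<noteq> 0 \<Longrightarrow> phi a b c d x = a + b*(1/x) + c*(1/x)^2 + d*(1/x)^3"
  by (simp add: phi_def field_simps power2_eq_square power3_eq_cube)

lemma phi_decr: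
  fixes a b c d :: real
  assumes a: "a > 0" and b: "b > 0" and d: "d > 0" and c: "c \<ge> - sqrt (3*b*d)"
    and xy: "0 < x" "x < y"
  shows "phi a b c d y < phi a b c d x"
proof -
  define u where "u = 1/x"
  define v where "v = 1/y"
  have uv: "0 < v" "v < u" using xy by (auto simp: u_def v_def frac_less2)
  define M where "M = b + c*(u+v) + d*(u^2+u*v+v^2)"
  have px: "phi a b c d x = a + b*u + c*u^2 + d*u^3" using phi_alt[of x a b c d] xy by (simp add: u_def)
  have py: "phi a b c d y = a + b*v + c*v^2 + d*v^3" using phi_alt[of y a b c d] xy by (simp add: v_def)
  have diff: "phi a b c d x - phi a b c d y = (u - v) * M"
    unfolding px py M_def by (simp add: algebra_simps power2_eq_square power3_eq_cube)
  have "M > 0"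
  proof (cases "c \<ge> 0")
    case True
    then show ?thesis using uv b d by (simp add: M_def add_pos_nonneg)
  next
    case False
    have s: "sqrt (3*b*d) ^ 2 = 3*b*d" using b d by simp
    have "-c \<le> sqrt (3*b*d)" using c by simp
    hence "(-c)^2 \<le> sqrt (3*b*d) ^ 2" using False by (intro power_mono) auto
    hence "c^2 \<le> 3*b*d" using s by simp
    have "12*d*M = (2*c+3*d*(u+v))^2 + (12*b*d - 4*c^2) + 3*d^2*(u-v)^2"
      by (simp add: M_def algebra_simps power2_eq_square)
    moreover have "3*d^2*(u-v)^2 > 0" using uv d by simp
    moreover have "(2*c+3*d*(u+v))^2 \<ge> 0" by simp
    ultimately have "12*d*M > 0" using \<open>c^2 \<le> 3*b*d\<close> by linarith
    then show ?thesis using d by (simp add: zero_less_mult_iff)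
  qed
  with uv have "(u - v) * M > 0" by simp
  with diff show ?thesis by linarith
qed


lemma fixed_exists:
  fixes a b c d :: real
  assumes a: "a > 0" and b: "b > 0" and d: "d > 0"
  shows "\<exists>t>0. phi a b c d t = t"
proof -
  define p where "p = (\<lambda>t::real. t^4 - (a*t^3+b*t^2+c*t+d))"
  define T where "T = 1 + a + b + \<bar>c\<bar> + d"
  have T1: "T \<ge> 1" using a b d by (simp add: T_def)
  have T3: "T^3 \<ge> T^2" "T^2 \<ge> T"
    using T1 power_increasing[of 2 3 T] power_increasing[of 1 2 T] by simp_all
  have "T^4 = T^3 * T" by (simp add: power_def)
  also have "\<dots> = T^3 + a*T^3 + b*T^3 + \<bar>c\<bar>*T^3 + d*T^3" by (simp add: T_def algebra_simps)
  finally have T4: "T^4 = T^3 + a*T^3 + b*T^3 + \<bar>c\<bar>*T^3 + d*T^3" .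
  have "b*T^3 \<ge> b*T^2" using b T3 by simp
  moreover have "\<bar>c\<bar>*T^3 \<ge> \<bar>c\<bar>*T" using T3 by (intro mult_left_mono) auto
  moreover have "\<bar>c\<bar>*T \<ge> c*T" using T1 by (intro mult_right_mono) auto
  moreover have "d*T^3 \<ge> d" using d T1 by simp
  moreover have "T^3 > 0" using T1 by simp
  ultimately have pT: "p T > 0" unfolding p_def using T4 by linarith
  have p0: "p 0 < 0" using d by (simp add: p_def)
  have "continuous_on {0..T} p" unfolding p_def by (intro continuous_intros)
  then obtain t where t: "0 \<le> t" "t \<le> T" "p t = 0"
    using IVT'[of p 0 0 T] pT p0 T1 by auto
  have "t \<noteq> 0" using t p0 by auto
  with t have tp: "t > 0" by simp
  have "a*t^3+b*t^2+c*t+d = t^4" using t by (simp add: p_def)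
  hence "phi a b c d t = t^4 / t^3" by (simp add: phi_def)
  also have "\<dots> = t" using tp by (simp add: power_def field_simps)
  finally show ?thesis using tp by blast
qed

lemma phi_diff:
  fixes a b c d x y :: real
  assumes x: "x > 0" and y: "y > 0" and P: "b*x^2 + 2*c*x + 3*d = 0"
  shows "phi a b c d y - phi a b c d x = -((y-x)^2*((-c*x-2*d)*y - d*x))/(x^3*y^3)"
proof -
  have "phi a b c d y - phi a b c d x
     = ((a*y^3+b*y^2+c*y+d)*x^3 - (a*x^3+b*x^2+c*x+d)*y^3)/(x^3*y^3)"
    using x y by (simp add: phi_def field_simps)
  also have "(a*y^3+b*y^2+c*y+d)*x^3 - (a*x^3+b*x^2+c*x+d)*y^3
     = (x-y)*((y-x)*((-c*x-2*d)*y - d*x) + y^2*(b*x^2 + 2*c*x + 3*d))"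
    by (simp add: algebra_simps power2_eq_square power3_eq_cube)
  also have "\<dots> = -((y-x)^2*((-c*x-2*d)*y - d*x))"
    using P by (simp add: algebra_simps power2_eq_square)
  finally show ?thesis .
qed

lemma local_min_crit:
  fixes a b c d x :: real
  assumes x: "x > 0" and P: "b*x^2 + 2*c*x + 3*d = 0" and s: "b*x + c < 0"
  shows "is_local_min (phi a b c d) x"
proof -
  define \<alpha> where "\<alpha> = -c*x-2*d"
  define K where "K = x^2 * (-(b*x+c))"
  have K: "K > 0" using x s by (simp add: K_def)
  have Cx: "\<alpha>*x - d*x = -K"
  proof -
    have "3*d = -b*x^2 - 2*c*x" using P by simp
    hence "d*x = (-b*x^2 - 2*c*x)*x/3" by simp
    thus ?thesis by (simp add: \<alpha>_def K_def algebra_simps power2_eq_square)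
  qed
  define e where "e = min (x/2) (K/(\<bar>\<alpha>\<bar>+1))"
  have e: "e > 0" using x K by (simp add: e_def)
  show ?thesis unfolding is_local_min_def
  proof (intro exI[of _ e] conjI allI impI)
    show "e > 0" by (rule e)
    fix y assume ye: "\<bar>y - x\<bar> < e"
    have "\<bar>y - x\<bar> < x/2" using ye by (simp add: e_def)
    moreover have "-(y-x) \<le> \<bar>y - x\<bar>" by (rule abs_ge_minus_self)
    ultimately have yp: "y > 0" using x by linarith
    have "\<bar>\<alpha>\<bar>*\<bar>y - x\<bar> \<le> (\<bar>\<alpha>\<bar>+1)*e" using ye e by (intro mult_mono) auto
    also have "\<dots> \<le> (\<bar>\<alpha>\<bar>+1)*(K/(\<bar>\<alpha>\<bar>+1))" by (intro mult_left_mono) (auto simp: e_def)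
    also have "\<dots> = K" by simp
    finally have b1: "\<bar>\<alpha>\<bar>*\<bar>y - x\<bar> \<le> K" .
    have "\<alpha>*y - d*x = (\<alpha>*x - d*x) + \<alpha>*(y-x)" by (simp add: algebra_simps)
    also have "\<dots> \<le> -K + \<bar>\<alpha>\<bar>*\<bar>y - x\<bar>" using Cx
      by (simp add: abs_mult[symmetric])
    finally have "\<alpha>*y - d*x \<le> 0" using b1 by linarith
    hence "-((y-x)^2*(\<alpha>*y - d*x)) \<ge> 0" by (simp add: mult_nonneg_nonpos)
    hence "-((y-x)^2*(\<alpha>*y - d*x))/(x^3*y^3) \<ge> 0" using x yp by (intro divide_nonneg_pos) simp_all
    hence "phi a b c d y - phi a b c d x \<ge> 0" using phi_diff[OF x yp P, of a] by (simp add: \<alpha>_def)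
    thus "phi a b c d x \<le> phi a b c d y" by simp
  qed
qed

lemma local_max_crit:
  fixes a b c d x :: real
  assumes x: "x > 0" and P: "b*x^2 + 2*c*x + 3*d = 0" and s: "b*x + c > 0"
  shows "is_local_max (phi a b c d) x"
proof -
  define \<alpha> where "\<alpha> = -c*x-2*d"
  define K where "K = x^2 * (b*x+c)"
  have K: "K > 0" using x s by (simp add: K_def)
  have Cx: "\<alpha>*x - d*x = K"
  proof -
    have "3*d = -b*x^2 - 2*c*x" using P by simp
    hence "d*x = (-b*x^2 - 2*c*x)*x/3" by simp
    thus ?thesis by (simp add: \<alpha>_def K_def algebra_simps power2_eq_square)
  qed
  define e where "e = min (x/2) (K/(\<bar>\<alpha>\<bar>+1))"
  have e: "e > 0" using x K by (simp add: e_def)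
  show ?thesis unfolding is_local_max_def
  proof (intro exI[of _ e] conjI allI impI)
    show "e > 0" by (rule e)
    fix y assume ye: "\<bar>y - x\<bar> < e"
    have "\<bar>y - x\<bar> < x/2" using ye by (simp add: e_def)
    moreover have "-(y-x) \<le> \<bar>y - x\<bar>" by (rule abs_ge_minus_self)
    ultimately have yp: "y > 0" using x by linarith
    have "\<bar>\<alpha>\<bar>*\<bar>y - x\<bar> \<le> (\<bar>\<alpha>\<bar>+1)*e" using ye e by (intro mult_mono) auto
    also have "\<dots> \<le> (\<bar>\<alpha>\<bar>+1)*(K/(\<bar>\<alpha>\<bar>+1))" by (intro mult_left_mono) (auto simp: e_def)
    also have "\<dots> = K" by simp
    finally have b1: "\<bar>\<alpha>\<bar>*\<bar>y - x\<bar> \<le> K" .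
    have "\<alpha>*y - d*x = (\<alpha>*x - d*x) + \<alpha>*(y-x)" by (simp add: algebra_simps)
    also have "\<dots> \<ge> K - \<bar>\<alpha>\<bar>*\<bar>y - x\<bar>" using Cx
      by (simp add: abs_mult[symmetric])
    finally have "\<alpha>*y - d*x \<ge> 0" using b1 by linarith
    hence "-((y-x)^2*(\<alpha>*y - d*x)) \<le> 0" by simp
    hence "-((y-x)^2*(\<alpha>*y - d*x))/(x^3*y^3) \<le> 0" using x yp by (simp add: divide_nonpos_pos)
    hence "phi a b c d y - phi a b c d x \<le> 0" using phi_diff[OF x yp P, of a] by (simp add: \<alpha>_def)
    thus "phi a b c d y \<le> phi a b c d x" by simp
  qed
qed


theorem theorem1:
  fixes a b c d :: real
  assumes "a > 0" and "b > 0" and "d > 0"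
  shows "(\<exists>!x. x < 0 \<and> Q a b d x = 0)
    \<and> (c > c_minus a b d \<longrightarrow>
         (\<forall>x0 > 0. \<forall>n. ((phi a b c d) ^^ n) x0 > 0))
    \<and> c_minus a b d < - sqrt (3 * b * d)
    \<and> (c \<ge> - sqrt (3 * b * d) \<longrightarrow>
         (\<forall>x y. 0 < x \<and> x < y \<longrightarrow> phi a b c d y < phi a b c d x)
         \<and> (\<exists>!t. t > 0 \<and> phi a b c d t = t))
    \<and> (c_minus a b d < c \<and> c < - sqrt (3 * b * d) \<longrightarrow>
         (let xm = (- c - sqrt (c ^ 2 - 3 * b * d)) / b;
              xM = (- c + sqrt (c ^ 2 - 3 * b * d)) / b
          in 0 < xm \<and> xm < xM
             \<and> is_local_min (phi a b c d) xm
             \<and> is_local_max (phi a b c d) xM))"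
proof -
  note a = assms(1) and b = assms(2) and d = assms(3)
  define z where "z = c_minus a b d"
  note cp = cm_props[OF a b d, folded z_def]
  define s where "s = sqrt (3*b*d)"
  have s0: "s > 0" using b d by (simp add: s_def)
  have s2: "s^2 = 3*b*d" using b d by (simp add: s_def)
  have P1: "\<exists>!x. x < 0 \<and> Q a b d x = 0" by (rule cp(4))
  have P2: "c > z \<longrightarrow> (\<forall>x0 > 0. \<forall>n. ((phi a b c d) ^^ n) x0 > 0)"
  proof (intro impI allI)
    assume cz: "c > z"
    have pos: "phi a b c d x > 0" if x: "x > 0" for x
    proof -
      have "a*x^3+b*x^2+c*x+d > 0"
      proof (cases "c \<ge> 0")
        case True
        then show ?thesis using a b d x by (simp add: add_pos_pos add_pos_nonneg)
      next
        case False
        hence "Q a b d c > 0" using cp(3)[of c] cz by simp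
        then show ?thesis using num_pos[OF a b d _ _ x] False by simp
      qed
      thus ?thesis using x by (simp add: phi_def)
    qed
    fix x0 :: real and n :: nat
    assume "x0 > 0"
    then show "((phi a b c d) ^^ n) x0 > 0" by (induction n) (auto intro: pos)
  qed
  have P3: "z < -s"
  proof -
    have s3: "s^3 = 3*b*d*s" using s2 by (simp add: power3_eq_cube power2_eq_square)
    have "Q a b d (-s) = -4*a*s^3 - b^2*s^2 + 18*a*b*d*s + 27*a^2*d^2 + 4*d*b^3"
      by (simp add: Q_def)
    also have "\<dots> = 6*a*b*d*s + b^3*d + 27*a^2*d^2"
      unfolding s3 s2 by (simp add: algebra_simps power2_eq_square power3_eq_cube)
    finally have "Q a b d (-s) > 0" using a b d s0 by (simp add: add_pos_pos)
    thus ?thesis using cp(3)[of "-s"] s0 by simp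
  qed
  have P4: "c \<ge> -s \<longrightarrow>
         (\<forall>x y. 0 < x \<and> x < y \<longrightarrow> phi a b c d y < phi a b c d x)
         \<and> (\<exists>!t. t > 0 \<and> phi a b c d t = t)"
  proof
    assume cs: "c \<ge> -s"
    have dec: "\<forall>x y. 0 < x \<and> x < y \<longrightarrow> phi a b c d y < phi a b c d x"
      using phi_decr[OF a b d] cs by (auto simp: s_def)
    obtain t where t: "t > 0" "phi a b c d t = t" using fixed_exists[OF a b d] by blast
    have "\<exists>!t. t > 0 \<and> phi a b c d t = t"
    proof (rule ex1I[of _ t])
      show "t > 0 \<and> phi a b c d t = t" using t by simp
      fix u assume u: "u > 0 \<and> phi a b c d u = u"
      show "u = t"
      proof (rule ccontr)
        assume "u \<noteq> t"
        hence "u < t \<or> t < u" by auto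
        thus False using dec t u by force
      qed
    qed
    with dec show "(\<forall>x y. 0 < x \<and> x < y \<longrightarrow> phi a b c d y < phi a b c d x)
         \<and> (\<exists>!t. t > 0 \<and> phi a b c d t = t)" by simp
  qed
  have P5: "z < c \<and> c < -s \<longrightarrow>
         (let xm = (- c - sqrt (c ^ 2 - 3 * b * d)) / b;
              xM = (- c + sqrt (c ^ 2 - 3 * b * d)) / b
          in 0 < xm \<and> xm < xM
             \<and> is_local_min (phi a b c d) xm
             \<and> is_local_max (phi a b c d) xM)"
  proof
    assume "z < c \<and> c < -s"
    hence cs: "c < -s" by simp
    define r where "r = sqrt (c^2 - 3*b*d)"
    have "s^2 < (-c)^2" using cs s0 by (intro power_strict_mono) auto
    hence c2: "c^2 > 3*b*d" using s2 by simp
    have r0: "r > 0" using c2 by (simp add: r_def)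
    have r2: "r^2 = c^2 - 3*b*d" using c2 by (simp add: r_def)
    have "r^2 < (-c)^2" using r2 b d by simp
    moreover have "0 \<le> -c" using cs s0 by linarith
    ultimately have rc: "r < -c" by (rule power_less_imp_less_base)
    define xm where "xm = (-c - r)/b"
    define xM where "xM = (-c + r)/b"
    have xm0: "xm > 0" using rc b by (simp add: xm_def)
    have xmM: "xm < xM" using r0 b by (simp add: xm_def xM_def divide_strict_right_mono)
    have bxm: "b*xm = -c - r" using b by (simp add: xm_def)
    have bxM: "b*xM = -c + r" using b by (simp add: xM_def)
    have "b*(b*xm^2 + 2*c*xm + 3*d) = (b*xm)^2 + 2*c*(b*xm) + 3*b*d"
      by (simp add: algebra_simps power2_eq_square)
    also have "\<dots> = r^2 - c^2 + 3*b*d" unfolding bxm by (simp add: algebra_simps power2_eq_square)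
    also have "\<dots> = 0" using r2 by simp
    finally have Pm: "b*xm^2 + 2*c*xm + 3*d = 0" using b by simp
    have "b*(b*xM^2 + 2*c*xM + 3*d) = (b*xM)^2 + 2*c*(b*xM) + 3*b*d"
      by (simp add: algebra_simps power2_eq_square)
    also have "\<dots> = r^2 - c^2 + 3*b*d" unfolding bxM by (simp add: algebra_simps power2_eq_square)
    also have "\<dots> = 0" using r2 by simp
    finally have PM: "b*xM^2 + 2*c*xM + 3*d = 0" using b by simp
    have mn: "is_local_min (phi a b c d) xm"
      using local_min_crit[OF xm0 Pm] bxm r0 by simp
    have xM0: "xM > 0" using xm0 xmM by simp
    have mx: "is_local_max (phi a b c d) xM"
      using local_max_crit[OF xM0 PM] bxM r0 by simp
    show "let xm = (- c - sqrt (c ^ 2 - 3 * b * d)) / b;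
              xM = (- c + sqrt (c ^ 2 - 3 * b * d)) / b
          in 0 < xm \<and> xm < xM
             \<and> is_local_min (phi a b c d) xm
             \<and> is_local_max (phi a b c d) xM"
      using xm0 xmM mn mx by (simp add: Let_def xm_def xM_def r_def)
  qed
  show ?thesis using P1 P2 P3 P4 P5 by (simp add: z_def s_def)
qed

end
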